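(* Let $X$ be an $n$-dimensional real normed space. Suppose that $Y, X_0 \subseteq X$ are linear subspaces such that $Y_0 =X_0 \cap Y$ is non-empty and $\lambda(Y_0, Y)=1$. Then $\lambda(Y, X) \geq \lambda(Y_0, X_0)$.
   Context: For a linear subspace $V$ of a normed space $W$, a projection onto $V$ is a linear $P:W\to V$ with $P|_V=\mathrm{id}_V$, and $\lambda(V,W)$ is the infimum of the operator norms of such projections. *)

theory Defs
  imports "HOL-Analysis.Analysis"
begin

definition linear_on :: "'a::real_vector set \<Rightarrow> ('a \<Rightarrow> 'a) \<Rightarrow> bool" where
  "linear_on W P \<longleftrightarrow> (\<forall>x\<in>W. \<forall>y\<in>W. P (x + y) = P x + P y) \<and>
                      (\<forall>c. \<forall>x\<in>W. P (c *\<^sub>R x) = c *\<^sub>R P x)"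

definition opnorm_on :: "'a::real_normed_vector set \<Rightarrow> ('a \<Rightarrow> 'a) \<Rightarrow> real" where
  "opnorm_on W P = Inf {C. 0 \<le> C \<and> (\<forall>x\<in>W. norm (P x) \<le> C * norm x)}"

definition projections_onto :: "'a::real_normed_vector set \<Rightarrow> 'a set \<Rightarrow> ('a \<Rightarrow> 'a) set" where
  "projections_onto V W = {P. linear_on W P \<and> P ` W \<subseteq> V \<and> (\<forall>v\<in>V. P v = v)}"

definition proj_const :: "'a::real_normed_vector set \<Rightarrow> 'a set \<Rightarrow> real" where
  "proj_const V W = Inf (opnorm_on W ` projections_onto V W)"

end

theory Submission
  imports Defs
begin

lemma proj_exists:
  fixes S :: "'a::real_vector set"
  assumes "subspace S"
  shows "\<exists>g. linear g \<and> (\<forall>x. g x \<in> S) \<and> (\<forall>v\<in>S. g v = v)"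
proof -
  obtain C where C: "C \<subseteq> S" "independent C" "S \<subseteq> span C" by (rule basis_exists)
  obtain B where B: "C \<subseteq> B" "independent B" "UNIV \<subseteq> span B"
    by (rule maximal_independent_subset_extend[of C UNIV]) (use C in auto)
  obtain g where g: "linear g" "\<And>x. x\<in>B \<Longrightarrow> g x = (if x \<in> C then x else 0)"
    using linear_independent_extend[OF B(2), of "\<lambda>x. if x \<in> C then x else 0"] by blast
  have "g ` B \<subseteq> S"
  proof
    fix y assume "y \<in> g ` B"
    then obtain x where x: "x \<in> B" "y = g x" by blast
    show "y \<in> S"
    proof (cases "x \<in> C")
      case True then show ?thesis using x g(2) C(1) by auto
    next
      case False then show ?thesis using x g(2) assms subspace_0 by auto
    qed
  qed
  then have "span (g ` B) \<subseteq> S" using assms span_minimal by blast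
  then have sub: "g ` span B \<subseteq> S" by (simp add: span_linear_image[OF g(1)])
  have r: "\<forall>x. g x \<in> S"
  proof
    fix x
    have "x \<in> span B" using B(3) by blast
    then show "g x \<in> S" using sub by blast
  qed
  have "\<forall>v\<in>S. g v = v"
  proof
    fix v assume "v \<in> S"
    then have "v \<in> span C" using C by blast
    then show "g v = v" using linear_eq_on_span[OF g(1) linear_id, of C v] g(2) B(1) by (simp add: subset_iff)
  qed
  then show ?thesis using g r by blast
qed
lemma closed_span_of_bound:
  fixes B :: "'a::real_normed_vector set"
  assumes fin: "finite B" and c: "\<forall>t. (\<Sum>b\<in>B. \<bar>t b\<bar>) \<le> c * norm (\<Sum>b\<in>B. t b *\<^sub>R b)"
  shows "closed (span B)"
  unfolding closed_sequential_limits
proof (intro allI impI)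
  fix x l assume xl: "(\<forall>n. x n \<in> span B) \<and> x \<longlonglongrightarrow> l"
  then have "\<forall>n. \<exists>u. x n = (\<Sum>b\<in>B. u b *\<^sub>R b)" using span_finite[OF fin] by auto
  then obtain t where t: "\<And>n. x n = (\<Sum>b\<in>B. t n b *\<^sub>R b)" by metis
  have C: "Cauchy x" using xl LIMSEQ_imp_Cauchy by blast
  have "\<forall>b\<in>B. convergent (\<lambda>n. t n b)"
  proof
    fix b assume bB: "b \<in> B"
    have "Cauchy (\<lambda>n. t n b)"
    proof (rule metric_CauchyI)
      fix e :: real assume e: "e > 0"
      define e' where "e' = e / (\<bar>c\<bar> + 1)"
      have e': "e' > 0" using e by (simp add: e'_def)
      obtain M where M: "\<And>m n. M \<le> m \<Longrightarrow> M \<le> n \<Longrightarrow> dist (x m) (x n) < e'"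
        using metric_CauchyD[OF C e'] by blast
      show "\<exists>M. \<forall>m\<ge>M. \<forall>n\<ge>M. dist (t m b) (t n b) < e"
      proof (intro exI allI impI)
        fix m n assume mn: "M \<le> m" "M \<le> n"
        have "x m - x n = (\<Sum>b\<in>B. (t m b - t n b) *\<^sub>R b)"
          unfolding t by (simp add: sum_subtractf[symmetric] scaleR_diff_left)
        then have h: "(\<Sum>b\<in>B. \<bar>t m b - t n b\<bar>) \<le> c * norm (x m - x n)"
          using c[rule_format, of "\<lambda>b. t m b - t n b"] by simp
        have "\<bar>t m b - t n b\<bar> \<le> (\<Sum>b\<in>B. \<bar>t m b - t n b\<bar>)"
          using member_le_sum[OF bB, of "\<lambda>b. \<bar>t m b - t n b\<bar>"] fin by simp
        also have "\<dots> \<le> c * norm (x m - x n)" by (rule h)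
        also have "\<dots> \<le> (\<bar>c\<bar> + 1) * norm (x m - x n)"
          by (intro mult_right_mono) auto
        also have "\<dots> < (\<bar>c\<bar> + 1) * e'"
          proof (rule mult_strict_left_mono)
          show "norm (x m - x n) < e'" using M[OF mn] by (simp add: dist_norm)
        qed simp
        also have "\<dots> = e" by (simp add: e'_def)
        finally show "dist (t m b) (t n b) < e" by (simp add: dist_real_def)
      qed
    qed
    then show "convergent (\<lambda>n. t n b)" by (simp add: Cauchy_convergent_iff)
  qed
  then have "\<forall>b\<in>B. \<exists>L. (\<lambda>n. t n b) \<longlonglongrightarrow> L" by (simp add: convergent_def)
  then obtain u where u: "\<And>b. b \<in> B \<Longrightarrow> (\<lambda>n. t n b) \<longlonglongrightarrow> u b" by metis
  have "x \<longlonglongrightarrow> (\<Sum>b\<in>B. u b *\<^sub>R b)"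
    unfolding t by (intro tendsto_sum tendsto_scaleR u tendsto_const)
  then have "l = (\<Sum>b\<in>B. u b *\<^sub>R b)" using xl LIMSEQ_unique by blast
  then show "l \<in> span B" by (simp add: span_base span_scale span_sum)
qed

lemma indep_bound:
  fixes B :: "'a::real_normed_vector set"
  assumes "finite B" "independent B"
  shows "\<exists>c>0. \<forall>t. (\<Sum>b\<in>B. \<bar>t b\<bar>) \<le> c * norm (\<Sum>b\<in>B. t b *\<^sub>R b)"
  using assms
proof (induction B rule: finite_induct)
  case empty show ?case by (intro exI[of _ 1]) simp
next
  case (insert a B)
  have indB: "independent B" and aB: "a \<notin> span B"
    using insert.prems insert.hyps(2) by (simp_all add: independent_insert)
  obtain c where c: "c > 0" "\<forall>t. (\<Sum>b\<in>B. \<bar>t b\<bar>) \<le> c * norm (\<Sum>b\<in>B. t b *\<^sub>R b)"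
    using insert.IH indB by blast
  have "closed (span B)" by (rule closed_span_of_bound[OF insert.hyps(1) c(2)])
  then have "open (- span B)" by (simp add: open_Compl)
  then obtain e where e: "e > 0" "\<And>y. dist y a < e \<Longrightarrow> y \<in> - span B"
    using aB unfolding open_dist by blast
  have key: "e \<le> norm (a - y)" if "y \<in> span B" for y
  proof (rule ccontr)
    assume "\<not> e \<le> norm (a - y)"
    then have "dist y a < e" by (simp add: dist_norm norm_minus_commute)
    then show False using e(2) that by blast
  qed
  define c' where "c' = 1 / e + c * (1 + norm a / e)"
  have c'pos: "c' > 0" unfolding c'_def using e c by (simp add: add_pos_nonneg)
  show ?case
  proof (intro exI[of _ c'] conjI allI c'pos)
    fix t :: "'a \<Rightarrow> real"
    define s where "s = t a"
    define y where "y = (\<Sum>b\<in>B. t b *\<^sub>R b)"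
    define x where "x = s *\<^sub>R a + y"
    have ysp: "y \<in> span B" unfolding y_def by (simp add: span_base span_scale span_sum)
    have sumx: "(\<Sum>b\<in>insert a B. t b *\<^sub>R b) = x"
      unfolding x_def y_def s_def using insert.hyps by simp
    have suma: "(\<Sum>b\<in>insert a B. \<bar>t b\<bar>) = \<bar>s\<bar> + (\<Sum>b\<in>B. \<bar>t b\<bar>)"
      unfolding s_def using insert.hyps by simp
    have h1: "\<bar>s\<bar> * e \<le> norm x"
    proof (cases "s = 0")
      case True then show ?thesis by simp
    next
      case False
      have "- ((1/s) *\<^sub>R y) \<in> span B" using ysp by (simp add: span_neg span_scale)
      then have "e \<le> norm (a - (- ((1/s) *\<^sub>R y)))" by (rule key)
      also have "a - (- ((1/s) *\<^sub>R y)) = a + (1/s) *\<^sub>R y" by simp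
      finally have "e \<le> norm (a + (1/s) *\<^sub>R y)" .
      then have "\<bar>s\<bar> * e \<le> \<bar>s\<bar> * norm (a + (1/s) *\<^sub>R y)"
        by (simp add: mult_left_mono)
      also have "\<dots> = norm (s *\<^sub>R (a + (1/s) *\<^sub>R y))" by simp
      also have "s *\<^sub>R (a + (1/s) *\<^sub>R y) = x"
        unfolding x_def using False by (simp add: scaleR_add_right)
      finally show ?thesis .
    qed
    have h2: "norm y \<le> norm x + \<bar>s\<bar> * norm a"
    proof -
      have "y = x - s *\<^sub>R a" unfolding x_def by simp
      then have "norm y \<le> norm x + norm (s *\<^sub>R a)" using norm_triangle_ineq4 by metis
      then show ?thesis by simp
    qed
    have h3: "\<bar>s\<bar> \<le> norm x / e" using h1 e(1) by (simp add: pos_le_divide_eq)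
    have "(\<Sum>b\<in>B. \<bar>t b\<bar>) \<le> c * norm y" using c(2) unfolding y_def by blast
    also have "\<dots> \<le> c * (norm x + \<bar>s\<bar> * norm a)" using h2 c(1) by (simp add: mult_left_mono)
    also have "\<dots> \<le> c * (norm x + norm x / e * norm a)"
      using h3 c(1) by (intro mult_left_mono add_left_mono mult_right_mono) auto
    finally have h4: "(\<Sum>b\<in>B. \<bar>t b\<bar>) \<le> c * (norm x + norm x / e * norm a)" .
    have "(\<Sum>b\<in>insert a B. \<bar>t b\<bar>) \<le> norm x / e + c * (norm x + norm x / e * norm a)"
      using suma h3 h4 by linarith
    also have "\<dots> = c' * norm x" unfolding c'_def by (simp add: algebra_simps)
    finally show "(\<Sum>b\<in>insert a B. \<bar>t b\<bar>) \<le> c' * norm (\<Sum>b\<in>insert a B. t b *\<^sub>R b)"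
      by (simp add: sumx)
  qed
qed

lemma linear_on_bounded:
  fixes W :: "'a::real_normed_vector set"
  assumes fd: "\<exists>B. finite B \<and> span B = (UNIV::'a set)" and W: "subspace W" and P: "linear_on W P"
  shows "\<exists>C\<ge>0. \<forall>x\<in>W. norm (P x) \<le> C * norm x"
proof -
  obtain pr where pr: "linear pr" "\<And>x. pr x \<in> W" "\<And>v. v \<in> W \<Longrightarrow> pr v = v"
    using proj_exists[OF W] by blast
  define g where "g = (\<lambda>x. P (pr x))"
  have lg: "linear g"
  proof (rule linearI)
    fix x y
    have "g (x + y) = P (pr x + pr y)" unfolding g_def by (simp add: linear_add[OF pr(1)])
    also have "\<dots> = P (pr x) + P (pr y)" using P pr(2) unfolding linear_on_def by blast
    finally show "g (x + y) = g x + g y" unfolding g_def .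
  next
    fix r :: real and x
    have "g (r *\<^sub>R x) = P (r *\<^sub>R pr x)" unfolding g_def by (simp add: linear_scale[OF pr(1)])
    also have "\<dots> = r *\<^sub>R P (pr x)" using P pr(2) unfolding linear_on_def by blast
    finally show "g (r *\<^sub>R x) = r *\<^sub>R g x" unfolding g_def .
  qed
  obtain D where D: "D \<subseteq> W" "independent D" "W \<subseteq> span D" by (rule basis_exists)
  obtain B0 where B0: "finite B0" "span B0 = (UNIV::'a set)" using fd by blast
  have finD: "finite D" using independent_span_bound[OF B0(1) D(2)] B0(2) by blast
  obtain c where c: "c > 0" "\<forall>t. (\<Sum>b\<in>D. \<bar>t b\<bar>) \<le> c * norm (\<Sum>b\<in>D. t b *\<^sub>R b)"
    using indep_bound[OF finD D(2)] by blast
  define M where "M = (\<Sum>d\<in>D. norm (g d))"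
  have M0: "M \<ge> 0" unfolding M_def by (simp add: sum_nonneg)
  have Md: "norm (g d) \<le> M" if "d \<in> D" for d
    unfolding M_def using member_le_sum[OF that, of "\<lambda>d. norm (g d)"] finD by simp
  show ?thesis
  proof (intro exI[of _ "M * c"] conjI ballI)
    show "0 \<le> M * c" using M0 c(1) by simp
  next
    fix x assume xW: "x \<in> W"
    then have "x \<in> span D" using D(3) by blast
    then obtain t where t: "x = (\<Sum>d\<in>D. t d *\<^sub>R d)" using span_finite[OF finD] by blast
    have "P x = g x" unfolding g_def using pr(3)[OF xW] by simp
    also have "g x = (\<Sum>d\<in>D. t d *\<^sub>R g d)" unfolding t
      by (simp add: linear_sum[OF lg] linear_scale[OF lg] o_def)
    finally have Px: "P x = (\<Sum>d\<in>D. t d *\<^sub>R g d)" .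
    have "norm (P x) \<le> (\<Sum>d\<in>D. norm (t d *\<^sub>R g d))" unfolding Px by (rule norm_sum)
    also have "\<dots> = (\<Sum>d\<in>D. \<bar>t d\<bar> * norm (g d))" by simp
    also have "\<dots> \<le> (\<Sum>d\<in>D. \<bar>t d\<bar> * M)"
      by (intro sum_mono mult_left_mono Md) auto
    also have "\<dots> = (\<Sum>d\<in>D. \<bar>t d\<bar>) * M" by (simp add: sum_distrib_right)
    also have "\<dots> \<le> (c * norm x) * M" using c(2) M0 t by (intro mult_right_mono) auto
    finally show "norm (P x) \<le> M * c * norm x" by (simp add: mult_ac)
  qed
qed

lemma opnorm_props:
  fixes W :: "'a::real_normed_vector set"
  assumes b: "\<exists>C\<ge>0. \<forall>x\<in>W. norm (P x) \<le> C * norm x"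
  shows "0 \<le> opnorm_on W P"
    and "\<And>x. x \<in> W \<Longrightarrow> norm (P x) \<le> opnorm_on W P * norm x"
    and "\<And>C. 0 \<le> C \<Longrightarrow> \<forall>x\<in>W. norm (P x) \<le> C * norm x \<Longrightarrow> opnorm_on W P \<le> C"
proof -
  define S where "S = {C. 0 \<le> C \<and> (\<forall>x\<in>W. norm (P x) \<le> C * norm x)}"
  have S: "S \<noteq> {}" using b unfolding S_def by blast
  have bb: "bdd_below S" unfolding S_def bdd_below_def by auto
  have on: "opnorm_on W P = Inf S" unfolding opnorm_on_def S_def ..
  show "0 \<le> opnorm_on W P" unfolding on by (rule cInf_greatest[OF S]) (auto simp: S_def)
  show "\<And>C. 0 \<le> C \<Longrightarrow> \<forall>x\<in>W. norm (P x) \<le> C * norm x \<Longrightarrow> opnorm_on W P \<le> C"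
    unfolding on by (rule cInf_lower[OF _ bb]) (auto simp: S_def)
  fix x assume xW: "x \<in> W"
  show "norm (P x) \<le> opnorm_on W P * norm x"
  proof (cases "x = 0")
    case True
    obtain C where "C \<ge> 0" "\<forall>x\<in>W. norm (P x) \<le> C * norm x" using b by blast
    then have "norm (P x) \<le> 0" using xW True by force
    then show ?thesis using True by simp
  next
    case False
    then have nx: "norm x > 0" by simp
    have "norm (P x) / norm x \<le> Inf S"
    proof (rule cInf_greatest[OF S])
      fix C assume "C \<in> S"
      then have "norm (P x) \<le> C * norm x" using xW unfolding S_def by blast
      then show "norm (P x) / norm x \<le> C" using nx by (simp add: divide_le_eq)
    qed
    then show ?thesis unfolding on using nx by (simp add: divide_le_eq)
  qed
qed


theorem mainTheorem14:
  fixes Y X0 :: "'a::real_normed_vector set" and n :: nat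
  assumes "dim (UNIV :: 'a set) = n"
    and "\<exists>B. finite B \<and> span B = (UNIV :: 'a set)"
    and "subspace Y" and "subspace X0"
    and "X0 \<inter> Y \<noteq> {0}"
    and "proj_const (X0 \<inter> Y) Y = 1"
  shows "proj_const Y UNIV \<ge> proj_const (X0 \<inter> Y) X0"
proof -
  note fd = assms(2)
  define Y0 where "Y0 = X0 \<inter> Y"
  have sY0: "subspace Y0" unfolding Y0_def using assms(3,4) by (simp add: subspace_inter)
  have Y0Y: "Y0 \<subseteq> Y" "Y0 \<subseteq> X0" unfolding Y0_def by auto
  have lin_on: "linear_on W g" if "linear g" for W and g :: "'a \<Rightarrow> 'a"
    using that unfolding linear_on_def by (simp add: linear_add linear_scale)
  have nonempty: "projections_onto S W \<noteq> {}" if sS: "subspace S" for S W :: "'a set"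
  proof -
    obtain g where g: "linear g" "\<And>x. g x \<in> S" "\<And>v. v \<in> S \<Longrightarrow> g v = v"
      using proj_exists[OF sS] by blast
    have "g \<in> projections_onto S W" unfolding projections_onto_def using g(2,3) lin_on[OF g(1)] by blast
    then show ?thesis by blast
  qed
  have bnd: "\<exists>C\<ge>0. \<forall>x\<in>W. norm (P x) \<le> C * norm x" if "subspace W" "P \<in> projections_onto S W"
    for S W :: "'a set" and P
    using linear_on_bounded[OF fd that(1)] that(2) unfolding projections_onto_def by blast
  have bdd: "bdd_below (opnorm_on W ` projections_onto S W)" if "subspace W" for S W :: "'a set"
  proof -
    have "\<forall>r\<in>opnorm_on W ` projections_onto S W. 0 \<le> r"
      using opnorm_props(1)[OF bnd[OF that]] by blast
    then show ?thesis unfolding bdd_below_def by blast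
  qed
  have main: "proj_const Y0 X0 \<le> opnorm_on UNIV P" if P: "P \<in> projections_onto Y UNIV" for P
  proof -
    have PU: "\<exists>C\<ge>0. \<forall>x\<in>UNIV. norm (P x) \<le> C * norm x" by (rule bnd[OF subspace_UNIV P])
    have Pl: "linear_on UNIV P" "\<And>x. P x \<in> Y" "\<And>v. v \<in> Y \<Longrightarrow> P v = v"
      using P unfolding projections_onto_def by auto
    have step: "proj_const Y0 X0 \<le> opnorm_on Y Q * opnorm_on UNIV P"
      if Q: "Q \<in> projections_onto Y0 Y" for Q
    proof -
      have QY: "\<exists>C\<ge>0. \<forall>x\<in>Y. norm (Q x) \<le> C * norm x" by (rule bnd[OF assms(3) Q])
      have Ql: "linear_on Y Q" "Q ` Y \<subseteq> Y0" "\<And>v. v \<in> Y0 \<Longrightarrow> Q v = v"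
        using Q unfolding projections_onto_def by auto
      have R: "(\<lambda>x. Q (P x)) \<in> projections_onto Y0 X0"
        unfolding projections_onto_def
      proof (intro CollectI conjI ballI)
        show "linear_on X0 (\<lambda>x. Q (P x))"
          unfolding linear_on_def
        proof (intro conjI ballI allI)
          fix x y assume "x \<in> X0" "y \<in> X0"
          have "P (x + y) = P x + P y" using Pl(1) unfolding linear_on_def by blast
          moreover have "Q (P x + P y) = Q (P x) + Q (P y)"
            using Ql(1) Pl(2) unfolding linear_on_def by blast
          ultimately show "Q (P (x + y)) = Q (P x) + Q (P y)" by simp
        next
          fix c :: real and x assume "x \<in> X0"
          have "P (c *\<^sub>R x) = c *\<^sub>R P x" using Pl(1) unfolding linear_on_def by blast
          moreover have "Q (c *\<^sub>R P x) = c *\<^sub>R Q (P x)"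
            using Ql(1) Pl(2) unfolding linear_on_def by blast
          ultimately show "Q (P (c *\<^sub>R x)) = c *\<^sub>R Q (P x)" by simp
        qed
        show "(\<lambda>x. Q (P x)) ` X0 \<subseteq> Y0" using Ql(2) Pl(2) by (simp add: image_subset_iff)
        fix v assume "v \<in> Y0"
        then show "Q (P v) = v" using Pl(3)[of v] Ql(3)[of v] Y0Y by (simp add: subset_iff)
      qed
      have nb: "norm (Q (P x)) \<le> (opnorm_on Y Q * opnorm_on UNIV P) * norm x" for x
      proof -
        have "norm (Q (P x)) \<le> opnorm_on Y Q * norm (P x)"
          by (rule opnorm_props(2)[OF QY Pl(2)])
        also have "\<dots> \<le> opnorm_on Y Q * (opnorm_on UNIV P * norm x)"
          using opnorm_props(2)[OF PU] opnorm_props(1)[OF QY] by (intro mult_left_mono) auto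
        finally show ?thesis by (simp add: mult_ac)
      qed
      have "opnorm_on X0 (\<lambda>x. Q (P x)) \<le> opnorm_on Y Q * opnorm_on UNIV P"
        by (rule opnorm_props(3)[OF bnd[OF assms(4) R]])
          (use nb opnorm_props(1)[OF QY] opnorm_props(1)[OF PU] in auto)
      moreover have "proj_const Y0 X0 \<le> opnorm_on X0 (\<lambda>x. Q (P x))"
        unfolding proj_const_def by (rule cInf_lower[OF imageI[OF R] bdd[OF assms(4)]])
      ultimately show ?thesis by linarith
    qed
    have n0: "0 \<le> opnorm_on UNIV P" by (rule opnorm_props(1)[OF PU])
    show ?thesis
    proof (cases "opnorm_on UNIV P = 0")
      case True
      obtain Q where "Q \<in> projections_onto Y0 Y" using nonempty[OF sY0, of Y] by blast
      then have "proj_const Y0 X0 \<le> opnorm_on Y Q * opnorm_on UNIV P" by (rule step)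
      then show ?thesis using True by simp
    next
      case False
      then have pos: "opnorm_on UNIV P > 0" using n0 by simp
      have "proj_const Y0 X0 / opnorm_on UNIV P \<le> proj_const Y0 Y"
        unfolding proj_const_def[of Y0 Y]
      proof (rule cInf_greatest)
        show "opnorm_on Y ` projections_onto Y0 Y \<noteq> {}" using nonempty[OF sY0, of Y] by blast
      next
        fix r assume "r \<in> opnorm_on Y ` projections_onto Y0 Y"
        then obtain Q where Q: "Q \<in> projections_onto Y0 Y" "r = opnorm_on Y Q" by blast
        show "proj_const Y0 X0 / opnorm_on UNIV P \<le> r"
          using step[OF Q(1)] pos Q(2) by (simp add: divide_le_eq)
      qed
      then have "proj_const Y0 X0 / opnorm_on UNIV P \<le> 1" using assms(6) Y0_def by simp
      then show ?thesis using pos by (simp add: divide_le_eq)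
    qed
  qed
  have "proj_const Y0 X0 \<le> proj_const Y UNIV"
    unfolding proj_const_def[of Y UNIV]
  proof (rule cInf_greatest)
    show "opnorm_on UNIV ` projections_onto Y UNIV \<noteq> {}" using nonempty[OF assms(3)] by blast
  next
    fix r assume "r \<in> opnorm_on UNIV ` projections_onto Y UNIV"
    then show "proj_const Y0 X0 \<le> r" using main by blast
  qed
  then show ?thesis unfolding Y0_def .
qed

end
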